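(* Let $r$ be a parameter and let $H=(h_{n,k})_{n,k\ge0}$ be the exponential Riordan array $\left[e^x,x(1+rx/2)\right]$ (its $h$-matrix is $H$ itself). Let $\Gamma=(\gamma_{n,k})$ be its $\gamma$-matrix, and let $eF_r=H\cdot[e^x,x]$ be its $f$-matrix. Then, with ordinary generating functions $\sum_{n,k}a_{n,k}x^ny^k$: (i) the ordinary generating function of $\Gamma$ is $\mathcal{J}(1,1,1,\ldots;\, ry,2ry,3ry,\ldots)$; (ii) the ordinary generating function of $H$ is $\mathcal{J}(y+1,y+1,y+1,\ldots;\, ry,2ry,3ry,\ldots)$; (iii) the ordinary generating function of the reversal of $eF_r$ (the matrix with $(n,k)$ entry equal to the $(n,n-k)$ entry of $eF_r$) is $\mathcal{J}(2y+1,2y+1,2y+1,\ldots;\, ry(y+1),2ry(y+1),3ry(y+1),\ldots)$.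
   Context: An exponential Riordan array $[g(x),f(x)]$ is the lower-triangular matrix $(a_{n,k})_{n,k\ge0}$ with $a_{n,k}=\frac{n!}{k!}[x^n]g(x)f(x)^k$, where $g(0)=1$, $f(0)=0$, $f'(0)=1$; $[e^x,x]$ is the binomial matrix $\left(\binom{n}{k}\right)$. The matrix $H=\left[e^x,x(1+rx/2)\right]$ is Pascal-like: $h_{n,0}=h_{n,n}=1$ and $h_{n,n-k}=h_{n,k}$. Its $\gamma$-matrix $\Gamma=(\gamma_{n,k})_{0\le k\le \lfloor n/2\rfloor}$ is defined by $\sum_{k=0}^n h_{n,k}y^k=\sum_{k=0}^{\lfloor n/2\rfloor}\gamma_{n,k}\,y^k(1+y)^{n-2k}$ for all $n\ge0$. The $f$-matrix of $H$ is the product $H\cdot[e^x,x]$. The notation $\mathcal{J}(\alpha_1,\alpha_2,\ldots;\beta_1,\beta_2,\ldots)$ denotes the Jacobi continued fraction $\cfrac{1}{1-\alpha_1x-\cfrac{\beta_1x^2}{1-\alpha_2x-\cfrac{\beta_2x^2}{1-\cdots}}}$, a formal power series in $x$. *)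

theory Defs
  imports "HOL-Computational_Algebra.Computational_Algebra"
begin

text \<open>Infinite lower-triangular matrices are functions nat => nat => 'a.\<close>

definition exp_riordan :: "'a::field_char_0 fps \<Rightarrow> 'a fps \<Rightarrow> nat \<Rightarrow> nat \<Rightarrow> 'a" where
  "exp_riordan g f n k = fact n / fact k * fps_nth (g * f ^ k) n"

definition H_mat :: "'a::field_char_0 \<Rightarrow> nat \<Rightarrow> nat \<Rightarrow> 'a" where
  "H_mat r = exp_riordan (fps_exp 1) (fps_X * (1 + fps_const (r / 2) * fps_X))"

definition binom_mat :: "nat \<Rightarrow> nat \<Rightarrow> 'a::field_char_0" where
  "binom_mat = exp_riordan (fps_exp 1) fps_X"

text \<open>Product of lower-triangular matrices (the sum over j is finite since
  entry (n,j) vanishes for j > n).\<close>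
definition mat_mult :: "(nat \<Rightarrow> nat \<Rightarrow> 'a::comm_ring_1) \<Rightarrow> (nat \<Rightarrow> nat \<Rightarrow> 'a) \<Rightarrow> nat \<Rightarrow> nat \<Rightarrow> 'a" where
  "mat_mult A B n k = (\<Sum>j\<le>n. A n j * B j k)"

definition rev_mat :: "(nat \<Rightarrow> nat \<Rightarrow> 'a::zero) \<Rightarrow> nat \<Rightarrow> nat \<Rightarrow> 'a" where
  "rev_mat A n k = (if k \<le> n then A n (n - k) else 0)"

definition gamma_mat :: "(nat \<Rightarrow> nat \<Rightarrow> 'a::comm_ring_1) \<Rightarrow> nat \<Rightarrow> nat \<Rightarrow> 'a" where
  "gamma_mat h = (THE \<gamma>. \<forall>n.
      (\<forall>k. n div 2 < k \<longrightarrow> \<gamma> n k = 0) \<and>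
      (\<Sum>k\<le>n. monom (h n k) k) =
      (\<Sum>k\<le>n div 2. monom (\<gamma> n k) k * [:1, 1:] ^ (n - 2 * k)))"

text \<open>Ordinary generating function sum_{n,k} a(n,k) x^n y^k of a lower-triangular
  matrix, as a power series in x, with y specialised to a field element.\<close>
definition ogf :: "(nat \<Rightarrow> nat \<Rightarrow> 'a::comm_ring_1) \<Rightarrow> 'a \<Rightarrow> 'a fps" where
  "ogf A y = Abs_fps (\<lambda>n. \<Sum>k\<le>n. A n k * y ^ k)"

text \<open>Truncated Jacobi continued fraction: depth m, starting at level k
  (alpha and beta are indexed from 1).\<close>
fun jtail :: "(nat \<Rightarrow> 'a::field) \<Rightarrow> (nat \<Rightarrow> 'a) \<Rightarrow> nat \<Rightarrow> nat \<Rightarrow> 'a fps" where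
  "jtail \<alpha> \<beta> 0 k = 1"
| "jtail \<alpha> \<beta> (Suc m) k =
     inverse (1 - fps_const (\<alpha> k) * fps_X - fps_const (\<beta> k) * fps_X ^ 2 * jtail \<alpha> \<beta> m (Suc k))"

definition jfrac :: "(nat \<Rightarrow> 'a::field) \<Rightarrow> (nat \<Rightarrow> 'a) \<Rightarrow> 'a fps" where
  "jfrac \<alpha> \<beta> = (THE F. \<forall>n. \<exists>M. \<forall>m\<ge>M. fps_nth (jtail \<alpha> \<beta> m 1) n = fps_nth F n)"

end

theory Submission
  imports Defs
begin

definition agree :: "nat \<Rightarrow> 'a::comm_ring_1 fps \<Rightarrow> 'a fps \<Rightarrow> bool" where
  "agree N f g \<longleftrightarrow> (\<forall>n<N. f $ n = g $ n)"

lemma agree_refl[simp]: "agree N f f" by (simp add: agree_def)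

lemma agree_mono: "agree N f g \<Longrightarrow> M \<le> N \<Longrightarrow> agree M f g"
  by (auto simp: agree_def)

lemma agree_add: "agree N f f' \<Longrightarrow> agree N g g' \<Longrightarrow> agree N (f + g) (f' + g')"
  by (auto simp: agree_def)

lemma agree_diff: "agree N f f' \<Longrightarrow> agree N g g' \<Longrightarrow> agree N (f - g) (f' - g')"
  by (auto simp: agree_def)

lemma agree_mult: "agree N f f' \<Longrightarrow> agree N g g' \<Longrightarrow> agree N (f * g) (f' * g')"
  unfolding agree_def fps_mult_nth
  by (auto intro!: sum.cong)

lemma agree_Xpow: "agree N f g \<Longrightarrow> agree (N + k) (fps_X ^ k * f) (fps_X ^ k * g)"
  by (auto simp: agree_def fps_X_power_mult_nth)

lemma agree_inverse:
  fixes f g :: "'a::field fps"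
  assumes "agree N f g" "f $ 0 \<noteq> 0"
  shows "agree N (inverse f) (inverse g)"
proof (cases "N = 0")
  case True then show ?thesis by (simp add: agree_def)
next
  case False
  then have g0: "g $ 0 = f $ 0" using assms(1) by (auto simp: agree_def)
  have e: "inverse f - inverse g = inverse f * (g - f) * inverse g"
  proof -
    have "inverse f * (g - f) * inverse g = inverse f * (g * inverse g) - (inverse f * f) * inverse g"
      by (simp add: algebra_simps)
    also have "\<dots> = inverse f - inverse g"
      using assms(2) g0 by (simp add: inverse_mult_eq_1 inverse_mult_eq_1')
    finally show ?thesis by simp
  qed
  have "agree N (g - f) 0" using assms(1) by (auto simp: agree_def)
  then have "agree N (inverse f * (g - f) * inverse g) (inverse f * 0 * inverse g)"
    by (intro agree_mult) auto
  then have "agree N (inverse f - inverse g) 0" by (simp add: e)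
  then show ?thesis by (auto simp: agree_def)
qed

lemma jtail_nth0: "jtail \<alpha> \<beta> m k $ 0 = 1"
  by (induction m arbitrary: k) (auto simp: fps_X_power_mult_nth power2_eq_square mult.assoc)

definition jden :: "(nat \<Rightarrow> 'a::field) \<Rightarrow> (nat \<Rightarrow> 'a) \<Rightarrow> nat \<Rightarrow> 'a fps \<Rightarrow> 'a fps" where
  "jden \<alpha> \<beta> k F = 1 - fps_const (\<alpha> k) * fps_X - fps_const (\<beta> k) * fps_X ^ 2 * F"

lemma jden0: "jden \<alpha> \<beta> k F $ 0 = 1"
  by (simp add: jden_def fps_X_power_mult_nth power2_eq_square mult.assoc)

lemma jtail_Suc: "jtail \<alpha> \<beta> (Suc m) k = inverse (jden \<alpha> \<beta> k (jtail \<alpha> \<beta> m (Suc k)))"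
  by (simp add: jden_def)

declare jtail.simps(2)[simp del]

lemma agree_jden: "agree N F G \<Longrightarrow> agree (N + 2) (jden \<alpha> \<beta> k F) (jden \<alpha> \<beta> k G)"
proof -
  assume a: "agree N F G"
  have "agree (N+2) (fps_X ^ 2 * F) (fps_X ^ 2 * G)" using agree_Xpow[OF a] .
  then have "agree (N+2) (fps_const (\<beta> k) * (fps_X ^ 2 * F)) (fps_const (\<beta> k) * (fps_X ^ 2 * G))"
    by (rule agree_mult[OF agree_refl])
  then have "agree (N+2) (fps_const (\<beta> k) * fps_X ^ 2 * F) (fps_const (\<beta> k) * fps_X ^ 2 * G)"
    by (simp add: mult.assoc)
  then show ?thesis unfolding jden_def
    by (intro agree_diff) auto
qed

lemma jtail_agree: "m \<le> m' \<Longrightarrow> agree m (jtail \<alpha> \<beta> m k) (jtail \<alpha> \<beta> m' k)"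
proof (induction m arbitrary: k m')
  case 0 then show ?case by (simp add: agree_def)
next
  case (Suc m)
  then obtain m'' where m': "m' = Suc m''" "m \<le> m''" by (cases m') auto
  have "agree m (jtail \<alpha> \<beta> m (Suc k)) (jtail \<alpha> \<beta> m'' (Suc k))" using Suc.IH m' by blast
  then have "agree (m+2) (jden \<alpha> \<beta> k (jtail \<alpha> \<beta> m (Suc k))) (jden \<alpha> \<beta> k (jtail \<alpha> \<beta> m'' (Suc k)))"
    by (rule agree_jden)
  then have "agree (m+2) (inverse (jden \<alpha> \<beta> k (jtail \<alpha> \<beta> m (Suc k)))) (inverse (jden \<alpha> \<beta> k (jtail \<alpha> \<beta> m'' (Suc k))))"
    by (rule agree_inverse) (simp add: jden0)
  then show ?case unfolding m' jtail_Suc by (rule agree_mono) simp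
qed

definition Fam :: "(nat \<Rightarrow> 'a::field) \<Rightarrow> (nat \<Rightarrow> 'a) \<Rightarrow> nat \<Rightarrow> 'a fps" where
  "Fam \<alpha> \<beta> k = Abs_fps (\<lambda>n. jtail \<alpha> \<beta> (Suc n) k $ n)"

lemma Fam_agree: "agree m (Fam \<alpha> \<beta> k) (jtail \<alpha> \<beta> m k)"
  unfolding agree_def
proof (intro allI impI)
  fix n assume n: "n < m"
  have "agree (Suc n) (jtail \<alpha> \<beta> (Suc n) k) (jtail \<alpha> \<beta> m k)"
    using n by (intro jtail_agree) simp
  then have "jtail \<alpha> \<beta> (Suc n) k $ n = jtail \<alpha> \<beta> m k $ n"
    unfolding agree_def by blast
  then show "Fam \<alpha> \<beta> k $ n = jtail \<alpha> \<beta> m k $ n" unfolding Fam_def by simp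
qed

lemma Fam0: "Fam \<alpha> \<beta> k $ 0 = 1"
  by (simp add: Fam_def jtail_nth0)

lemma Fam_rel: "Fam \<alpha> \<beta> k = inverse (jden \<alpha> \<beta> k (Fam \<alpha> \<beta> (Suc k)))"
proof (rule fps_ext)
  fix n
  have a1: "agree (Suc n) (Fam \<alpha> \<beta> k) (jtail \<alpha> \<beta> (Suc n) k)" by (rule Fam_agree)
  have "agree (n + 2) (jden \<alpha> \<beta> k (Fam \<alpha> \<beta> (Suc k))) (jden \<alpha> \<beta> k (jtail \<alpha> \<beta> n (Suc k)))"
    by (rule agree_jden, rule Fam_agree)
  then have "agree (n+2) (inverse (jden \<alpha> \<beta> k (Fam \<alpha> \<beta> (Suc k)))) (jtail \<alpha> \<beta> (Suc n) k)"
    unfolding jtail_Suc by (rule agree_inverse) (simp add: jden0)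
  with a1 show "Fam \<alpha> \<beta> k $ n = inverse (jden \<alpha> \<beta> k (Fam \<alpha> \<beta> (Suc k))) $ n"
    by (auto simp: agree_def)
qed

lemma jfrac_Fam: "jfrac \<alpha> \<beta> = Fam \<alpha> \<beta> 1"
  unfolding jfrac_def
proof (rule the_equality)
  show "\<forall>n. \<exists>M. \<forall>m\<ge>M. jtail \<alpha> \<beta> m 1 $ n = Fam \<alpha> \<beta> 1 $ n"
  proof
    fix n
    show "\<exists>M. \<forall>m\<ge>M. jtail \<alpha> \<beta> m 1 $ n = Fam \<alpha> \<beta> 1 $ n"
    proof (intro exI allI impI)
      fix m assume "Suc n \<le> m"
      then show "jtail \<alpha> \<beta> m 1 $ n = Fam \<alpha> \<beta> 1 $ n"
        using Fam_agree[of m \<alpha> \<beta> 1] by (simp add: agree_def)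
    qed
  qed
next
  fix F assume F: "\<forall>n. \<exists>M. \<forall>m\<ge>M. jtail \<alpha> \<beta> m 1 $ n = F $ n"
  show "F = Fam \<alpha> \<beta> 1"
  proof (rule fps_ext)
    fix n
    obtain M where M: "\<forall>m\<ge>M. jtail \<alpha> \<beta> m 1 $ n = F $ n" using F by blast
    have "F $ n = jtail \<alpha> \<beta> (max M (Suc n)) 1 $ n" using M by simp
    also have "\<dots> = Fam \<alpha> \<beta> 1 $ n" using Fam_agree[of "max M (Suc n)" \<alpha> \<beta> 1]
      by (simp add: agree_def)
    finally show "F $ n = Fam \<alpha> \<beta> 1 $ n" .
  qed
qed


fun Pre :: "(nat \<Rightarrow> 'a::field) \<Rightarrow> (nat \<Rightarrow> 'a) \<Rightarrow> nat \<Rightarrow> 'a fps" where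
  "Pre \<alpha> \<beta> 0 = 1"
| "Pre \<alpha> \<beta> (Suc k) = fps_X * (Pre \<alpha> \<beta> k * Fam \<alpha> \<beta> (Suc k))"

lemma Fam_eq: "Fam \<alpha> \<beta> j = 1 + fps_const (\<alpha> j) * (fps_X * Fam \<alpha> \<beta> j)
   + fps_const (\<beta> j) * (fps_X * (fps_X * (Fam \<alpha> \<beta> j * Fam \<alpha> \<beta> (Suc j))))"
proof -
  let ?F = "Fam \<alpha> \<beta> j" and ?G = "Fam \<alpha> \<beta> (Suc j)"
  have "?F * jden \<alpha> \<beta> j ?G = 1"
    by (subst Fam_rel) (rule inverse_mult_eq_1, simp add: jden0)
  then have "?F * (1 - fps_const (\<alpha> j) * fps_X - fps_const (\<beta> j) * fps_X ^ 2 * ?G) = 1"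
    by (simp add: jden_def)
  then show ?thesis by (simp add: algebra_simps power2_eq_square)
qed

lemma Pre_nth0: "Pre \<alpha> \<beta> k $ 0 = (if k = 0 then 1 else 0)"
  by (cases k) auto

lemma G_eq: "Pre \<alpha> \<beta> k * Fam \<alpha> \<beta> (Suc k) = Pre \<alpha> \<beta> k
   + fps_const (\<alpha> (Suc k)) * (fps_X * (Pre \<alpha> \<beta> k * Fam \<alpha> \<beta> (Suc k)))
   + fps_const (\<beta> (Suc k)) * (fps_X * (Pre \<alpha> \<beta> (Suc k) * Fam \<alpha> \<beta> (Suc (Suc k))))"
proof -
  have "Pre \<alpha> \<beta> k * Fam \<alpha> \<beta> (Suc k) = Pre \<alpha> \<beta> k * (1 + fps_const (\<alpha> (Suc k)) * (fps_X * Fam \<alpha> \<beta> (Suc k))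
   + fps_const (\<beta> (Suc k)) * (fps_X * (fps_X * (Fam \<alpha> \<beta> (Suc k) * Fam \<alpha> \<beta> (Suc (Suc k))))))"
    by (rule arg_cong[where f="\<lambda>x. Pre \<alpha> \<beta> k * x"], rule Fam_eq)
  then show ?thesis by (simp add: algebra_simps)
qed

lemma jfrac_paths:
  fixes P :: "nat \<Rightarrow> nat \<Rightarrow> 'a::field"
  assumes P0: "\<And>k. P 0 k = (if k = 0 then 1 else 0)"
  and PS: "\<And>n k. P (Suc n) k = (if k = 0 then 0 else P n (k - 1)) + \<alpha> (Suc k) * P n k + \<beta> (Suc k) * P n (Suc k)"
  shows "jfrac \<alpha> \<beta> $ n = P n 0"
proof -
  have main: "\<forall>k. (Pre \<alpha> \<beta> k * Fam \<alpha> \<beta> (Suc k)) $ n = P n k"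
  proof (induction n)
    case 0
    show ?case by (auto simp: P0 Pre_nth0 Fam0)
  next
    case (Suc n)
    show ?case
    proof
      fix k
      have pre: "Pre \<alpha> \<beta> k $ Suc n = (if k = 0 then 0 else P n (k - 1))"
        using Suc.IH by (cases k) auto
      have "(Pre \<alpha> \<beta> k * Fam \<alpha> \<beta> (Suc k)) $ Suc n = Pre \<alpha> \<beta> k $ Suc n
         + \<alpha> (Suc k) * (Pre \<alpha> \<beta> k * Fam \<alpha> \<beta> (Suc k)) $ n
         + \<beta> (Suc k) * (Pre \<alpha> \<beta> (Suc k) * Fam \<alpha> \<beta> (Suc (Suc k))) $ n"
        by (subst G_eq) simp
      also have "\<dots> = P (Suc n) k" by (simp only: pre Suc.IH[rule_format] PS)
      finally show "(Pre \<alpha> \<beta> k * Fam \<alpha> \<beta> (Suc k)) $ Suc n = P (Suc n) k" .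
    qed
  qed
  then show ?thesis using main[rule_format, of 0] by (simp add: jfrac_Fam)
qed


fun mu :: "'a::comm_ring_1 \<Rightarrow> 'a \<Rightarrow> nat \<Rightarrow> 'a" where
  "mu a b 0 = 1"
| "mu a b (Suc 0) = a"
| "mu a b (Suc (Suc n)) = a * mu a b (Suc n) + of_nat (Suc n) * b * mu a b n"

lemma choose_absorb: "Suc k * (N choose Suc k) = (N - k) * (N choose k)"
  using binomial_absorption[of k N] binomial_absorb_comp[of N k] by simp

lemma jfrac_mu:
  fixes a b :: "'a::field_char_0"
  shows "jfrac (\<lambda>_. a) (\<lambda>k. of_nat k * b) $ n = mu a b n"
proof -
  define P where "P n k = (if k \<le> n then of_nat (n choose k) * mu a b (n - k) else 0)" for n k
  have P0: "\<And>k. P 0 k = (if k = 0 then 1 else 0)" by (simp add: P_def)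
  have PS: "P (Suc n) k = (if k = 0 then 0 else P n (k - 1)) + a * P n k + of_nat (Suc k) * b * P n (Suc k)"
    for n k
  proof (cases "k \<le> n")
    case False
    then show ?thesis
      by (cases "k = Suc n") (auto simp: P_def)
  next
    case True
    then obtain m where n: "n = k + m" using le_Suc_ex by blast
    show ?thesis
    proof (cases m)
      case 0
      then show ?thesis
        by (cases k) (auto simp: P_def n algebra_simps)
    next
      case (Suc m')
      have mu2: "mu a b (Suc m) = a * mu a b m + of_nat m * b * mu a b m'"
        using Suc by simp
      have abs: "of_nat (Suc k) * (of_nat (n choose Suc k) :: 'a) = of_nat m * of_nat (n choose k)"
        using choose_absorb[of k n] n by (metis add_diff_cancel_left' of_nat_mult)
      have pas: "(of_nat (Suc n choose k) :: 'a) = of_nat (n choose k) + (if k = 0 then 0 else of_nat (n choose (k - 1)))"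
        by (cases k) (auto simp: algebra_simps)
      have "P (Suc n) k = of_nat (Suc n choose k) * mu a b (Suc m)"
        by (simp add: P_def n Suc_diff_le)
      also have "\<dots> = (if k = 0 then 0 else of_nat (n choose (k - 1)) * mu a b (Suc m))
          + a * (of_nat (n choose k) * mu a b m) + of_nat (Suc k) * b * (of_nat (n choose Suc k) * mu a b m')"
      proof -
        have t: "of_nat (Suc k) * b * (of_nat (n choose Suc k) * mu a b m') = (of_nat (Suc k) * of_nat (n choose Suc k)) * (b * mu a b m')"
          by (simp only: ac_simps)
        have t2: "of_nat (Suc k) * b * (of_nat (n choose Suc k) * mu a b m') = of_nat m * b * (of_nat (n choose k) * mu a b m')"
          unfolding t abs by (simp only: ac_simps)
        show ?thesis unfolding t2 pas
          by (simp add: algebra_simps mu2)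
      qed
      also have "\<dots> = (if k = 0 then 0 else P n (k - 1)) + a * P n k + of_nat (Suc k) * b * P n (Suc k)"
        using Suc by (auto simp: P_def n Suc_diff_le)
      finally show ?thesis .
    qed
  qed
  have "jfrac (\<lambda>_. a) (\<lambda>k. of_nat k * b) $ n = P n 0"
    by (rule jfrac_paths[where P=P, OF P0]) (simp only: PS)
  then show ?thesis by (simp add: P_def)
qed


lemma W_mu:
  fixes W :: "'a::field_char_0 fps"
  assumes W0: "W $ 0 = 1"
    and WD: "fps_deriv W = (fps_const a + fps_const b * fps_X) * W"
  shows "fact n * W $ n = mu a b n"
proof -
  have rec: "of_nat (Suc n) * W $ Suc n = a * W $ n + (if n = 0 then 0 else b * W $ (n - 1))" for n
  proof -
    have "fps_deriv W $ n = ((fps_const a + fps_const b * fps_X) * W) $ n" by (simp only: WD)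
    then show ?thesis by (simp add: distrib_right mult.assoc del: of_nat_Suc)
  qed
  have "fact n * W $ n = mu a b n \<and> fact (Suc n) * W $ Suc n = mu a b (Suc n)"
  proof (induction n)
    case 0 then show ?case using rec[of 0] W0 by simp
  next
    case (Suc n)
    have "fact (Suc (Suc n)) * W $ Suc (Suc n) = (fact (Suc n) :: 'a) * (of_nat (Suc (Suc n)) * W $ Suc (Suc n))"
      by (simp add: algebra_simps del: of_nat_Suc)
    also have "\<dots> = fact (Suc n) * (a * W $ Suc n + b * W $ n)"
      using rec[of "Suc n"] by simp
    also have "\<dots> = a * (fact (Suc n) * W $ Suc n) + of_nat (Suc n) * b * (fact n * W $ n)"
      by (simp add: algebra_simps del: of_nat_Suc)
    also have "\<dots> = mu a b (Suc (Suc n))" using Suc.IH by simp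
    finally show ?case using Suc.IH by simp
  qed
  then show ?thesis by simp
qed


lemma scale_exp:
  fixes c t :: "'a::field_char_0"
  shows "(fps_exp 1 * (1 + fps_const c * fps_X) ^ k) oo (fps_const t * fps_X)
         = fps_exp t * (1 + fps_const (c * t) * fps_X) ^ k"
proof -
  have b0: "(fps_const t * fps_X) $ 0 = 0" by simp
  have "(1 + fps_const c * fps_X) oo (fps_const t * fps_X) = 1 + fps_const (c * t) * fps_X"
    by (simp add: fps_compose_add_distrib fps_compose_mult_distrib[OF b0] mult.assoc[symmetric])
  then show ?thesis
    by (simp only: fps_compose_mult_distrib[OF b0] fps_compose_power[OF b0, symmetric] fps_exp_compose_linear mult_1_right)
qed

lemma step1:
  fixes c t :: "'a::field_char_0"
  assumes "k \<le> n"
  shows "t ^ (n - k) * (fps_exp 1 * (fps_X * (1 + fps_const c * fps_X)) ^ k) $ n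
       = (fps_exp t * (fps_X * (1 + fps_const (c * t) * fps_X)) ^ k) $ n"
proof -
  let ?phi = "fps_exp 1 * (1 + fps_const c * fps_X) ^ k"
  have "(fps_exp 1 * (fps_X * (1 + fps_const c * fps_X)) ^ k) $ n = (fps_X ^ k * ?phi) $ n"
    by (simp only: power_mult_distrib mult.left_commute)
  also have "\<dots> = ?phi $ (n - k)" using assms by (simp add: fps_X_power_mult_nth)
  finally have 1: "(fps_exp 1 * (fps_X * (1 + fps_const c * fps_X)) ^ k) $ n = ?phi $ (n - k)" .
  have "t ^ (n - k) * ?phi $ (n - k) = (?phi oo (fps_const t * fps_X)) $ (n - k)"
    by (simp add: fps_compose_linear)
  also have "\<dots> = (fps_exp t * (1 + fps_const (c * t) * fps_X) ^ k) $ (n - k)"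
    by (simp only: scale_exp)
  also have "\<dots> = (fps_X ^ k * (fps_exp t * (1 + fps_const (c * t) * fps_X) ^ k)) $ n"
    using assms by (simp add: fps_X_power_mult_nth)
  also have "\<dots> = (fps_exp t * (fps_X * (1 + fps_const (c * t) * fps_X)) ^ k) $ n"
    by (simp only: power_mult_distrib mult.left_commute)
  finally show ?thesis using 1 by simp
qed


lemma H_row:
  fixes r s t :: "'a::field_char_0"
  shows "(\<Sum>k\<le>n. H_mat r n k * s ^ k * t ^ (n - k)) = mu (s + t) (r * s * t) n"
proof -
  define u :: "'a fps" where "u = fps_X * (1 + fps_const (r / 2 * t) * fps_X)"
  define A where "A = (\<Sum>k\<le>n. fps_const (s ^ k / fact k) * u ^ k)"
  define W where "W = fps_exp t * (fps_exp 1 oo (fps_const s * u))"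
  have u0: "u $ 0 = 0" by (simp add: u_def)
  have su0: "(fps_const s * u) $ 0 = 0" by (simp add: u0)
  have a: "H_mat r n k * s ^ k * t ^ (n - k) = fact n * ((s ^ k / fact k) * (fps_exp t * u ^ k) $ n)"
    if "k \<le> n" for k
  proof -
    have "H_mat r n k * s ^ k * t ^ (n - k) = fact n / fact k * s ^ k *
       (t ^ (n - k) * (fps_exp 1 * (fps_X * (1 + fps_const (r / 2) * fps_X)) ^ k) $ n)"
      by (simp add: H_mat_def exp_riordan_def)
    also have "\<dots> = fact n / fact k * s ^ k * (fps_exp t * u ^ k) $ n"
      unfolding u_def using step1[OF that, of t "r/2"] by simp
    finally show ?thesis by simp
  qed
  have b: "(fps_exp t * A) $ n = (\<Sum>k\<le>n. (s ^ k / fact k) * (fps_exp t * u ^ k) $ n)"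
    unfolding A_def sum_distrib_left fps_sum_nth
    by (simp add: mult.left_commute[of "fps_exp t"])
  have c: "agree (Suc n) A (fps_exp 1 oo (fps_const s * u))"
    unfolding agree_def
  proof (intro allI impI)
    fix j assume j: "j < Suc n"
    have "A $ j = (\<Sum>k\<le>n. (s ^ k / fact k) * (u ^ k) $ j)"
      by (simp add: A_def fps_sum_nth)
    also have "\<dots> = (\<Sum>k\<in>{0..j}. (s ^ k / fact k) * (u ^ k) $ j)"
    proof (rule sum.mono_neutral_right)
      show "\<forall>i\<in>{..n} - {0..j}. s ^ i / fact i * u ^ i $ j = 0"
        using startsby_zero_power_prefix[OF u0] by auto
    qed (use j in auto)
    also have "\<dots> = (fps_exp 1 oo (fps_const s * u)) $ j"
      by (simp add: fps_compose_nth power_mult_distrib)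
    finally show "A $ j = (fps_exp 1 oo (fps_const s * u)) $ j" .
  qed
  have d: "(fps_exp t * A) $ n = W $ n"
    using agree_mult[OF agree_refl c, of "fps_exp t"] by (simp add: W_def agree_def)
  have W0: "W $ 0 = 1" by (simp add: W_def)
  have WD: "fps_deriv W = (fps_const (s + t) + fps_const (r * s * t) * fps_X) * W"
  proof -
    have du: "fps_deriv u = 1 + fps_const (r / 2 * t) * fps_X + fps_const (r / 2 * t) * fps_X"
      by (simp add: u_def algebra_simps)
    have dE: "fps_deriv (fps_exp 1 oo (fps_const s * u)) = (fps_exp 1 oo (fps_const s * u)) * (fps_const s * fps_deriv u)"
      by (simp add: fps_compose_deriv[OF su0])
    have "fps_deriv W = fps_const t * W + fps_exp t * ((fps_exp 1 oo (fps_const s * u)) * (fps_const s * fps_deriv u))"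
      unfolding W_def fps_deriv_mult dE by (simp add: algebra_simps)
    also have "\<dots> = (fps_const t + fps_const s * fps_deriv u) * W"
      by (simp add: W_def algebra_simps)
    also have "fps_const t + fps_const s * fps_deriv u = fps_const (s + t) + fps_const (r * s * t) * fps_X"
      by (simp add: du fps_eq_iff fps_X_nth fps_numeral_nth algebra_simps)
    finally show ?thesis .
  qed
  have "(\<Sum>k\<le>n. H_mat r n k * s ^ k * t ^ (n - k)) = fact n * (fps_exp t * A) $ n"
    by (simp add: a b sum_distrib_left)
  also have "\<dots> = mu (s + t) (r * s * t) n" using d W_mu[OF W0 WD] by simp
  finally show ?thesis .
qed


lemma ogf_nth: "ogf A y $ n = (\<Sum>k\<le>n. A n k * y ^ k)"
  by (simp add: ogf_def)

lemma part_ii: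
  fixes r y :: "'a::field_char_0"
  shows "ogf (H_mat r) y = jfrac (\<lambda>_. y + 1) (\<lambda>k. of_nat k * r * y)"
proof (rule fps_ext)
  fix n
  have "ogf (H_mat r) y $ n = (\<Sum>k\<le>n. H_mat r n k * y ^ k * 1 ^ (n - k))"
    by (simp add: ogf_nth)
  also have "\<dots> = mu (y + 1) (r * y) n" using H_row[of r n y 1] by simp
  also have "\<dots> = jfrac (\<lambda>_. y + 1) (\<lambda>k. of_nat k * (r * y)) $ n" by (simp add: jfrac_mu)
  finally show "ogf (H_mat r) y $ n = jfrac (\<lambda>_. y + 1) (\<lambda>k. of_nat k * r * y) $ n"
    by (simp add: mult.assoc)
qed

lemma binom_mat_eq: "binom_mat i j = (of_nat (i choose j) :: 'a::field_char_0)"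
proof (cases "j \<le> i")
  case True
  then show ?thesis
    by (simp add: binom_mat_def exp_riordan_def fps_X_power_mult_right_nth binomial_fact)
next
  case False
  then show ?thesis
    by (simp add: binom_mat_def exp_riordan_def fps_X_power_mult_right_nth)
qed

lemma inner_rev:
  fixes y :: "'a::field_char_0"
  assumes "i \<le> n"
  shows "(\<Sum>k\<le>n. of_nat (i choose (n - k)) * y ^ k) = (y + 1) ^ i * y ^ (n - i)"
proof -
  have "(\<Sum>k\<le>n. of_nat (i choose (n - k)) * y ^ k) = (\<Sum>l\<le>n. of_nat (i choose l) * y ^ (n - l))"
    by (rule sum.reindex_bij_witness[where i="\<lambda>k. n - k" and j="\<lambda>k. n - k"]) auto
  also have "\<dots> = (\<Sum>l\<le>i. of_nat (i choose l) * y ^ (n - l))"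
    by (rule sum.mono_neutral_right) (use assms in auto)
  also have "\<dots> = (\<Sum>l\<le>i. of_nat (i choose l) * 1 ^ l * y ^ (i - l)) * y ^ (n - i)"
    unfolding sum_distrib_right
  proof (rule sum.cong)
    fix l assume "l \<in> {..i}"
    then have "y ^ (n - l) = y ^ (i - l) * y ^ (n - i)" using assms
      by (simp add: power_add[symmetric])
    then show "of_nat (i choose l) * y ^ (n - l) = of_nat (i choose l) * 1 ^ l * y ^ (i - l) * y ^ (n - i)"
      by simp
  qed simp
  also have "\<dots> = (y + 1) ^ i * y ^ (n - i)"
    using binomial_ring[of 1 y i] by (simp only: add.commute[of y 1])
  finally show ?thesis .
qed

lemma part_iii:
  fixes r y :: "'a::field_char_0"
  shows "ogf (rev_mat (mat_mult (H_mat r) binom_mat)) y =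
           jfrac (\<lambda>_. 2 * y + 1) (\<lambda>k. of_nat k * r * y * (y + 1))"
proof (rule fps_ext)
  fix n
  have "ogf (rev_mat (mat_mult (H_mat r) binom_mat)) y $ n
      = (\<Sum>k\<le>n. (\<Sum>i\<le>n. H_mat r n i * of_nat (i choose (n - k))) * y ^ k)"
    by (simp add: ogf_nth rev_mat_def mat_mult_def binom_mat_eq)
  also have "\<dots> = (\<Sum>i\<le>n. H_mat r n i * (\<Sum>k\<le>n. of_nat (i choose (n - k)) * y ^ k))"
    unfolding sum_distrib_left sum_distrib_right
    by (subst sum.swap) (simp add: mult.assoc)
  also have "\<dots> = (\<Sum>i\<le>n. H_mat r n i * (y + 1) ^ i * y ^ (n - i))"
    by (rule sum.cong) (simp_all add: inner_rev mult.assoc)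
  also have "\<dots> = mu (2 * y + 1) (r * y * (y + 1)) n"
  proof -
    have e1: "y + 1 + y = 2 * y + 1" by simp
    have e2: "r * (y + 1) * y = r * y * (y + 1)" by (simp add: ac_simps)
    show ?thesis using H_row[of r n "y + 1" y] unfolding e1 e2 by (simp add: mult.assoc)
  qed
  also have "\<dots> = jfrac (\<lambda>_. 2 * y + 1) (\<lambda>k. of_nat k * (r * y * (y + 1))) $ n" by (simp add: jfrac_mu)
  finally show "ogf (rev_mat (mat_mult (H_mat r) binom_mat)) y $ n =
      jfrac (\<lambda>_. 2 * y + 1) (\<lambda>k. of_nat k * r * y * (y + 1)) $ n"
    by (simp add: mult.assoc)
qed


fun Mt :: "nat \<Rightarrow> nat \<Rightarrow> nat" where
  "Mt 0 k = (if k = 0 then 1 else 0)"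
| "Mt (Suc 0) k = (if k = 0 then 1 else 0)"
| "Mt (Suc (Suc n)) k = Mt (Suc n) k + (case k of 0 \<Rightarrow> 0 | Suc k' \<Rightarrow> Suc n * Mt n k')"

lemma Mt_zero: "n < 2 * k \<Longrightarrow> Mt n k = 0"
  by (induction n k rule: Mt.induct) (auto split: nat.split)

lemma Mt_sum_ext:
  fixes f :: "nat \<Rightarrow> 'a::comm_ring_1"
  assumes "n \<le> N"
  shows "(\<Sum>k\<le>N. of_nat (Mt n k) * f k) = (\<Sum>k\<le>n. of_nat (Mt n k) * f k)"
  by (rule sum.mono_neutral_right) (use assms in \<open>auto simp: Mt_zero\<close>)

lemma mu_closed:
  fixes a b :: "'a::comm_ring_1"
  shows "mu a b n = (\<Sum>k\<le>n. of_nat (Mt n k) * (a ^ (n - 2 * k) * b ^ k))"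
proof -
  have "mu a b n = (\<Sum>k\<le>n. of_nat (Mt n k) * (a ^ (n - 2 * k) * b ^ k)) \<and>
        mu a b (Suc n) = (\<Sum>k\<le>Suc n. of_nat (Mt (Suc n) k) * (a ^ (Suc n - 2 * k) * b ^ k))"
  proof (induction n)
    case 0
    then show ?case by simp
  next
    case (Suc n)
    let ?S = "\<lambda>m. (\<Sum>k\<le>m. of_nat (Mt m k) * (a ^ (m - 2 * k) * b ^ k))"
    have A: "(\<Sum>k\<le>Suc (Suc n). of_nat (Mt (Suc n) k) * (a ^ (Suc (Suc n) - 2 * k) * b ^ k)) = a * ?S (Suc n)"
    proof -
      have "(\<Sum>k\<le>Suc (Suc n). of_nat (Mt (Suc n) k) * (a ^ (Suc (Suc n) - 2 * k) * b ^ k))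
          = (\<Sum>k\<le>Suc n. of_nat (Mt (Suc n) k) * (a ^ (Suc (Suc n) - 2 * k) * b ^ k))"
        by (rule Mt_sum_ext) simp
      also have "\<dots> = (\<Sum>k\<le>Suc n. a * (of_nat (Mt (Suc n) k) * (a ^ (Suc n - 2 * k) * b ^ k)))"
      proof (rule sum.cong)
        fix k assume "k \<in> {..Suc n}"
        show "of_nat (Mt (Suc n) k) * (a ^ (Suc (Suc n) - 2 * k) * b ^ k) = a * (of_nat (Mt (Suc n) k) * (a ^ (Suc n - 2 * k) * b ^ k))"
        proof (cases "2 * k \<le> Suc n")
          case True
          then have "Suc (Suc n) - 2 * k = Suc (Suc n - 2 * k)" by simp
          then show ?thesis by (simp add: ac_simps)
        next
          case False
          then show ?thesis by (simp add: Mt_zero)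
        qed
      qed simp
      finally show ?thesis by (simp only: sum_distrib_left)
    qed
    have B: "(\<Sum>k\<le>Suc (Suc n). of_nat (case k of 0 \<Rightarrow> 0 | Suc k' \<Rightarrow> Suc n * Mt n k') * (a ^ (Suc (Suc n) - 2 * k) * b ^ k))
       = of_nat (Suc n) * b * ?S n"
    proof -
      have "(\<Sum>k\<le>Suc (Suc n). of_nat (case k of 0 \<Rightarrow> 0 | Suc k' \<Rightarrow> Suc n * Mt n k') * (a ^ (Suc (Suc n) - 2 * k) * b ^ k))
          = (\<Sum>k\<le>Suc n. of_nat (Suc n * Mt n k) * (a ^ (Suc (Suc n) - 2 * Suc k) * b ^ Suc k))"
        by (subst sum.atMost_Suc_shift) simp
      also have "\<dots> = (\<Sum>k\<le>Suc n. of_nat (Mt n k) * (of_nat (Suc n) * b * (a ^ (n - 2 * k) * b ^ k)))"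
        by (rule sum.cong) (simp_all add: algebra_simps)
      also have "\<dots> = (\<Sum>k\<le>n. of_nat (Mt n k) * (of_nat (Suc n) * b * (a ^ (n - 2 * k) * b ^ k)))"
        by (rule Mt_sum_ext) simp
      finally show ?thesis by (simp add: sum_distrib_left ac_simps)
    qed
    have "mu a b (Suc (Suc n)) = ?S (Suc (Suc n))"
      using Suc.IH A B by (simp add: sum.distrib distrib_right del: of_nat_Suc)
    then show ?case using Suc.IH by simp
  qed
  then show ?thesis by simp
qed


lemma indep:
  fixes c :: "nat \<Rightarrow> 'a::comm_ring_1"
  assumes "(\<Sum>k\<le>m. monom (c k) k * [:1, 1:] ^ (n - 2 * k)) = 0"
  shows "k \<le> m \<Longrightarrow> c k = 0"
proof (induction k rule: less_induct)
  case (less k)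
  have "0 = coeff (\<Sum>j\<le>m. monom (c j) j * [:1, 1:] ^ (n - 2 * j)) k" using assms by simp
  also have "\<dots> = (\<Sum>j\<le>m. (if k < j then 0 else c j * coeff ([:1, 1:] ^ (n - 2 * j)) (k - j)))"
    by (simp add: coeff_sum coeff_monom_mult)
  also have "\<dots> = (\<Sum>j\<le>m. (if j = k then c k else 0))"
  proof (rule sum.cong)
    fix j assume j: "j \<in> {..m}"
    show "(if k < j then 0 else c j * coeff ([:1, 1:] ^ (n - 2 * j)) (k - j)) = (if j = k then c k else 0)"
    proof (cases "j < k")
      case True
      then show ?thesis using less.IH[of j] j less.prems by auto
    next
      case False
      then show ?thesis by (cases "j = k") (auto simp: coeff_0_power)
    qed
  qed simp
  also have "\<dots> = c k" using less.prems by simp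
  finally show ?case by simp
qed

lemma H_row1:
  fixes r y :: "'a::field_char_0"
  shows "(\<Sum>k\<le>n. H_mat r n k * y ^ k) = mu (y + 1) (r * y) n"
  using H_row[of r n y 1] by simp

lemma gamma_prop:
  fixes r :: "'a::field_char_0"
  shows "\<forall>n. (\<forall>k. n div 2 < k \<longrightarrow> of_nat (Mt n k) * r ^ k = 0) \<and>
      (\<Sum>k\<le>n. monom (H_mat r n k) k) =
      (\<Sum>k\<le>n div 2. monom (of_nat (Mt n k) * r ^ k) k * [:1, 1:] ^ (n - 2 * k))"
proof -
  let ?g = "\<lambda>n k. of_nat (Mt n k) * r ^ k"
  show ?thesis
  proof (intro allI conjI impI)
    fix n k :: nat
    assume "n div 2 < k"
    then show "?g n k = 0" by (simp add: Mt_zero)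
  next
    fix n
    show "(\<Sum>k\<le>n. monom (H_mat r n k) k) = (\<Sum>k\<le>n div 2. monom (?g n k) k * [:1, 1:] ^ (n - 2 * k))"
    proof (rule poly_eq_poly_eq_iff[THEN iffD1], rule ext)
      fix y :: 'a
      have "poly (\<Sum>k\<le>n. monom (H_mat r n k) k) y = (\<Sum>k\<le>n. H_mat r n k * y ^ k)"
        by (simp add: poly_sum poly_monom)
      also have "\<dots> = mu (y + 1) (r * y) n" by (rule H_row1)
      also have "\<dots> = (\<Sum>k\<le>n. of_nat (Mt n k) * ((y + 1) ^ (n - 2 * k) * (r * y) ^ k))"
        by (rule mu_closed)
      also have "\<dots> = (\<Sum>k\<le>n div 2. of_nat (Mt n k) * ((y + 1) ^ (n - 2 * k) * (r * y) ^ k))"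
        by (rule sum.mono_neutral_right) (auto simp: Mt_zero)
      also have "\<dots> = poly (\<Sum>k\<le>n div 2. monom (?g n k) k * [:1, 1:] ^ (n - 2 * k)) y"
        by (simp add: poly_sum poly_monom poly_power power_mult_distrib ac_simps)
      finally show "poly (\<Sum>k\<le>n. monom (H_mat r n k) k) y = poly (\<Sum>k\<le>n div 2. monom (?g n k) k * [:1, 1:] ^ (n - 2 * k)) y" .
    qed
  qed
qed

lemma gamma_eq:
  fixes r :: "'a::field_char_0"
  shows "gamma_mat (H_mat r) = (\<lambda>n k. of_nat (Mt n k) * r ^ k)"
  unfolding gamma_mat_def
proof (rule the_equality)
  show "\<forall>n. (\<forall>k. n div 2 < k \<longrightarrow> of_nat (Mt n k) * r ^ k = 0) \<and>
      (\<Sum>k\<le>n. monom (H_mat r n k) k) =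
      (\<Sum>k\<le>n div 2. monom (of_nat (Mt n k) * r ^ k) k * [:1, 1:] ^ (n - 2 * k))"
    by (rule gamma_prop)
next
  let ?g = "\<lambda>n k. of_nat (Mt n k) * r ^ k"
  fix \<gamma> :: "nat \<Rightarrow> nat \<Rightarrow> 'a"
  assume G: "\<forall>n. (\<forall>k. n div 2 < k \<longrightarrow> \<gamma> n k = 0) \<and>
      (\<Sum>k\<le>n. monom (H_mat r n k) k) =
      (\<Sum>k\<le>n div 2. monom (\<gamma> n k) k * [:1, 1:] ^ (n - 2 * k))"
  have G0: "(\<Sum>k\<le>n. monom (H_mat r n k) k) = (\<Sum>k\<le>n div 2. monom (?g n k) k * [:1, 1:] ^ (n - 2 * k))" for n
    using gamma_prop[of r] by blast
  show "\<gamma> = ?g"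
  proof (intro ext)
    fix n k
    show "\<gamma> n k = ?g n k"
    proof (cases "n div 2 < k")
      case True
      then show ?thesis using G by (simp add: Mt_zero)
    next
      case False
      have "(\<Sum>j\<le>n div 2. monom (\<gamma> n j - ?g n j) j * [:1, 1:] ^ (n - 2 * j)) =
            (\<Sum>j\<le>n div 2. monom (\<gamma> n j) j * [:1, 1:] ^ (n - 2 * j)) - (\<Sum>j\<le>n div 2. monom (?g n j) j * [:1, 1:] ^ (n - 2 * j))"
        by (simp add: sum_subtractf diff_monom[symmetric] left_diff_distrib)
      also have "\<dots> = 0" using G G0[of n] by simp
      finally have "\<gamma> n k - ?g n k = 0"
        using indep[where c="\<lambda>j. \<gamma> n j - ?g n j"] False by auto
      then show ?thesis by simp
    qed
  qed
qed

lemma part_i: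
  fixes r y :: "'a::field_char_0"
  shows "ogf (gamma_mat (H_mat r)) y = jfrac (\<lambda>_. 1) (\<lambda>k. of_nat k * r * y)"
proof (rule fps_ext)
  fix n
  have "ogf (gamma_mat (H_mat r)) y $ n = (\<Sum>k\<le>n. of_nat (Mt n k) * (1 ^ (n - 2 * k) * (r * y) ^ k))"
    by (simp add: ogf_nth gamma_eq power_mult_distrib ac_simps)
  also have "\<dots> = mu 1 (r * y) n" by (rule mu_closed[symmetric])
  also have "\<dots> = jfrac (\<lambda>_. 1) (\<lambda>k. of_nat k * (r * y)) $ n" by (simp add: jfrac_mu)
  finally show "ogf (gamma_mat (H_mat r)) y $ n = jfrac (\<lambda>_. 1) (\<lambda>k. of_nat k * r * y) $ n"
    by (simp add: mult.assoc)
qed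

theorem proposition4:
  fixes r y :: "'a::field_char_0"
  shows "ogf (gamma_mat (H_mat r)) y = jfrac (\<lambda>_. 1) (\<lambda>k. of_nat k * r * y) \<and>
         ogf (H_mat r) y = jfrac (\<lambda>_. y + 1) (\<lambda>k. of_nat k * r * y) \<and>
         ogf (rev_mat (mat_mult (H_mat r) binom_mat)) y =
           jfrac (\<lambda>_. 2 * y + 1) (\<lambda>k. of_nat k * r * y * (y + 1))"
  using part_i part_ii part_iii by blast

end
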